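(* Let $y$ be a Lyndon word with $|y|>1$, written as $y=x^kzb$ where $x$ is a Lyndon word, $k\ge 1$, $|x|$ is the smallest period of $x^kz$, $z$ is a proper prefix of $x$ (possibly empty), $a$ is the letter such that $za$ is a prefix of $x$, and $b$ is a letter with $a<b$. Let $1\le e\le k$ and let $u,v$ be non-empty proper prefixes of $x$ such that $x^eu$ and $x^ev$ are proper prefixes of $y$. If $u\prec v$, then $x^eu\prec x^ev$.
   Context: Lexicographic order $<$ on finite and infinite words: $u<v$ if $u$ is a proper prefix of $v$, or $u=ras$, $v=rbt$ with letters $a<b$. A Lyndon word is a non-empty word strictly smaller than each of its proper non-empty suffixes. Infinite ordering: for non-empty words $u,v$, $u\prec v$ iff $u^\infty<v^\infty$, or $u^\infty=v^\infty$ and $|u|>|v|$, where $u^\infty=uuu\cdots$. A period of a word $w$ is an integer $p\ge1$ with $w[i]=w[i+p]$ whenever both are defined. *)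

theory Defs
  imports Main "HOL-Library.Sublist"
begin

definition lex_less :: "'a::linorder list \<Rightarrow> 'a list \<Rightarrow> bool" where
  "lex_less u v \<longleftrightarrow> strict_prefix u v \<or>
     (\<exists>r a b s t. u = r @ a # s \<and> v = r @ b # t \<and> a < b)"

definition inf_lex_less :: "(nat \<Rightarrow> 'a::linorder) \<Rightarrow> (nat \<Rightarrow> 'a) \<Rightarrow> bool" where
  "inf_lex_less f g \<longleftrightarrow> (\<exists>n. (\<forall>i<n. f i = g i) \<and> f n < g n)"

definition pow_inf :: "'a list \<Rightarrow> nat \<Rightarrow> 'a" where
  "pow_inf u = (\<lambda>i. u ! (i mod length u))"

definition inf_prec :: "'a::linorder list \<Rightarrow> 'a list \<Rightarrow> bool" where
  "inf_prec u v \<longleftrightarrow> inf_lex_less (pow_inf u) (pow_inf v) \<or>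
     (pow_inf u = pow_inf v \<and> length u > length v)"

definition lyndon :: "'a::linorder list \<Rightarrow> bool" where
  "lyndon w \<longleftrightarrow> w \<noteq> [] \<and> (\<forall>i. 0 < i \<and> i < length w \<longrightarrow> lex_less w (drop i w))"

definition is_period :: "'a list \<Rightarrow> nat \<Rightarrow> bool" where
  "is_period w p \<longleftrightarrow> p \<ge> 1 \<and> (\<forall>i. i + p < length w \<longrightarrow> w ! i = w ! (i + p))"

definition smallest_period :: "'a list \<Rightarrow> nat" where
  "smallest_period w = (LEAST p. is_period w p)"

definition wpow :: "'a list \<Rightarrow> nat \<Rightarrow> 'a list" where
  "wpow x k = concat (replicate k x)"

end

theory Submission
  imports Defs "HOL-Library.List_Lexorder"
begin

lemma lex_less_iff: "lex_less u v \<longleftrightarrow> u < v"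
proof -
  have "strict_prefix u v \<longleftrightarrow> (\<exists>a w. v = u @ a # w)"
    by (metis append_Cons append_Nil2 neq_Nil_conv prefix_def strict_prefix_def self_append_conv)
  note h = this
  show ?thesis unfolding lex_less_def list_less_def lexord_def h by blast
qed

lemma cancel_less: "((w::'a::linorder list) @ a < w @ b) \<longleftrightarrow> a < b"
  unfolding list_less_def by (simp add: lexord_same_pref_iff)

lemma app_less_notpre:
  assumes "(a::'a::linorder list) < b" "length b \<le> length a"
  shows "a @ c < b @ d"
  using assms unfolding list_less_def by (rule lexord_sufI)

lemma wpow_Suc: "wpow z (Suc m) = z @ wpow z m"
  by (simp add: wpow_def)

lemma wpow_len: "length (wpow z m) = m * length z"
  by (induction m) (auto simp: wpow_def)

lemma wpow_nth: "i < m * length z \<Longrightarrow> wpow z m ! i = z ! (i mod length z)"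
proof (induction m arbitrary: i)
  case 0 then show ?case by simp
next
  case (Suc m)
  show ?case
  proof (cases "i < length z")
    case True then show ?thesis by (simp add: wpow_Suc nth_append)
  next
    case False
    then have "i - length z < m * length z" using Suc.prems by auto
    then show ?thesis using False Suc.IH by (simp add: wpow_Suc nth_append le_mod_geq)
  qed
qed

lemma comm_pow:
  assumes "s @ t = t @ s" "s \<noteq> []" "t \<noteq> []"
  shows "pow_inf s = pow_inf t"
proof -
  obtain m n z where s: "concat (replicate m z) = s" and t: "concat (replicate n z) = t"
    using comm_append_are_replicate[OF assms(1)] by blast
  have ls: "length s = m * length z" using s wpow_len[of z m] by (simp add: wpow_def)
  have lt: "length t = n * length z" using t wpow_len[of z n] by (simp add: wpow_def)
  have zp: "m > 0" "n > 0" using ls lt assms by (metis gr0I length_0_conv mult_0)+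
  have "pow_inf s i = z ! (i mod length z)" for i
  proof -
    have "i mod length s < m * length z" using ls assms by (metis length_greater_0_conv mod_less_divisor)
    then have "pow_inf s i = z ! (i mod length s mod length z)"
      unfolding pow_inf_def using wpow_nth[of "i mod length s" m z] s by (simp add: wpow_def)
    also have "\<dots> = z ! (i mod length z)" using ls by (simp add: mod_mod_cancel)
    finally show ?thesis .
  qed
  moreover have "pow_inf t i = z ! (i mod length z)" for i
  proof -
    have "i mod length t < n * length z" using lt assms by (metis length_greater_0_conv mod_less_divisor)
    then have "pow_inf t i = z ! (i mod length t mod length z)"
      unfolding pow_inf_def using wpow_nth[of "i mod length t" n z] t by (simp add: wpow_def)
    also have "\<dots> = z ! (i mod length z)" using lt by (simp add: mod_mod_cancel)
    finally show ?thesis .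
  qed
  ultimately show ?thesis by auto
qed

lemma pow_comm:
  assumes "pow_inf s = pow_inf t" "s \<noteq> []" "t \<noteq> []"
  shows "s @ t = t @ s"
proof -
  have per: "pow_inf s (i + length s) = pow_inf s i" for i by (simp add: pow_inf_def)
  have pert: "pow_inf t (i + length t) = pow_inf t i" for i by (simp add: pow_inf_def)
  have "(s @ t) ! i = pow_inf s i" if "i < length (s@t)" for i
  proof (cases "i < length s")
    case True then show ?thesis by (simp add: nth_append pow_inf_def)
  next
    case False
    then have "(s@t) ! i = pow_inf t (i - length s)" using that by (simp add: nth_append pow_inf_def)
    also have "\<dots> = pow_inf s (i - length s + length s)" using assms(1) per by simp
    finally show ?thesis using False by simp
  qed
  moreover have "(t @ s) ! i = pow_inf s i" if "i < length (s@t)" for i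
  proof (cases "i < length t")
    case True then show ?thesis using assms(1) by (simp add: nth_append pow_inf_def)
  next
    case False
    then have "(t@s) ! i = pow_inf s (i - length t)" using that by (simp add: nth_append pow_inf_def)
    also have "\<dots> = pow_inf t (i - length t + length t)" using assms(1) pert by simp
    finally show ?thesis using False assms(1) by simp
  qed
  ultimately show ?thesis by (intro nth_equalityI) auto
qed

lemma wpow_0: "wpow z 0 = []" by (simp add: wpow_def)

lemma powL: "(a::'a::linorder list) @ b < b @ a \<Longrightarrow> n \<ge> 1 \<Longrightarrow> wpow a n @ b < b @ wpow a n"
proof (induction n)
  case 0 then show ?case by simp
next
  case (Suc n)
  show ?case
  proof (cases "n = 0")
    case True then show ?thesis using Suc.prems by (simp add: wpow_Suc wpow_0)
  next
    case False
    have "wpow a (Suc n) @ b = a @ (wpow a n @ b)" by (simp add: wpow_Suc)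
    also have "\<dots> < a @ (b @ wpow a n)" using Suc False by (simp add: cancel_less)
    also have "\<dots> = (a @ b) @ wpow a n" by simp
    also have "\<dots> < (b @ a) @ wpow a n" using app_less_notpre[of "a@b" "b@a" "wpow a n" "wpow a n"] Suc.prems(1) by simp
    also have "\<dots> = b @ wpow a (Suc n)" by (simp add: wpow_Suc)
    finally show ?thesis .
  qed
qed

lemma powR: "(a::'a::linorder list) @ b < b @ a \<Longrightarrow> m \<ge> 1 \<Longrightarrow> a @ wpow b m < wpow b m @ a"
proof (induction m)
  case 0 then show ?case by simp
next
  case (Suc m)
  show ?case
  proof (cases "m = 0")
    case True then show ?thesis using Suc.prems by (simp add: wpow_Suc wpow_0)
  next
    case False
    have "a @ wpow b (Suc m) = (a @ b) @ wpow b m" by (simp add: wpow_Suc)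
    also have "\<dots> < (b @ a) @ wpow b m" using app_less_notpre[of "a@b" "b@a" "wpow b m" "wpow b m"] Suc.prems(1) by simp
    also have "\<dots> = b @ (a @ wpow b m)" by simp
    also have "\<dots> < b @ (wpow b m @ a)" using Suc False by (simp add: cancel_less)
    also have "\<dots> = wpow b (Suc m) @ a" by (simp add: wpow_Suc)
    finally show ?thesis .
  qed
qed

lemma lt_inf:
  assumes "s \<noteq> []" "t \<noteq> []" "(s::'a::linorder list) @ t < t @ s"
  shows "inf_lex_less (pow_inf s) (pow_inf t)"
proof -
  define S where "S = wpow s (length t)"
  define T where "T = wpow t (length s)"
  have h1: "S @ t < t @ S" unfolding S_def using assms by (intro powL) (auto simp: Suc_le_eq)
  have h2: "S @ T < T @ S" unfolding T_def using h1 assms by (intro powR) (auto simp: Suc_le_eq)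
  have lS: "length S = length s * length t" and lT: "length T = length s * length t"
    unfolding S_def T_def by (simp_all add: wpow_len)
  have "S < T"
  proof (rule ccontr)
    assume "\<not> S < T"
    then have "T < S \<or> T = S" by auto
    then show False
    proof
      assume "T < S"
      then have "T @ S < S @ T" using lS lT app_less_notpre[of T S S T] by auto
      then show False using h2 by auto
    next
      assume "T = S" then show False using h2 by auto
    qed
  qed
  then obtain r c d v w where c: "c < d" "S = r @ c # v" "T = r @ d # w"
    using lS lT unfolding list_less_def lexord_def by auto
  have Si: "S ! i = pow_inf s i" if "i < length S" for i
    using that lS unfolding S_def pow_inf_def by (simp add: wpow_nth mult.commute)
  have Ti: "T ! i = pow_inf t i" if "i < length T" for i
    using that lT unfolding T_def pow_inf_def by (simp add: wpow_nth)
  show ?thesis unfolding inf_lex_less_def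
  proof (intro exI conjI allI impI)
    fix i assume "i < length r"
    then show "pow_inf s i = pow_inf t i"
      using Si[of i] Ti[of i] c by (simp add: nth_append)
  next
    show "pow_inf s (length r) < pow_inf t (length r)"
      using Si[of "length r"] Ti[of "length r"] c by (simp add: nth_append)
  qed
qed

lemma inf_asym: "inf_lex_less f g \<Longrightarrow> \<not> inf_lex_less g f"
  unfolding inf_lex_less_def
  by (metis less_asym linorder_neqE_nat)

lemma KEY:
  assumes "s \<noteq> []" "t \<noteq> []"
  shows "inf_prec s (t::'a::linorder list) \<longleftrightarrow> s @ t < t @ s \<or> (s @ t = t @ s \<and> length t < length s)"
proof
  assume h: "inf_prec s t"
  show "s @ t < t @ s \<or> (s @ t = t @ s \<and> length t < length s)"
  proof (cases "pow_inf s = pow_inf t")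
    case True
    then have "s @ t = t @ s" using pow_comm assms by blast
    moreover have "\<not> inf_lex_less (pow_inf s) (pow_inf t)" using True inf_asym by metis
    ultimately show ?thesis using h unfolding inf_prec_def by auto
  next
    case False
    then have il: "inf_lex_less (pow_inf s) (pow_inf t)" using h unfolding inf_prec_def by auto
    have "\<not> t @ s < s @ t" using lt_inf[of t s] assms il inf_asym by blast
    moreover have "s @ t \<noteq> t @ s" using False comm_pow assms by blast
    ultimately show ?thesis by auto
  qed
next
  assume "s @ t < t @ s \<or> (s @ t = t @ s \<and> length t < length s)"
  then show "inf_prec s t" unfolding inf_prec_def using lt_inf comm_pow assms by blast
qed

theorem mainTheorem4:
  fixes x y z u v :: "'a::linorder list" and a b :: 'a and k e :: nat
  assumes "lyndon y" and "length y > 1"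
    and "y = wpow x k @ z @ [b]"
    and "lyndon x" and "k \<ge> 1"
    and "length x = smallest_period (wpow x k @ z)"
    and "strict_prefix z x"
    and "prefix (z @ [a]) x"
    and "a < b"
    and "1 \<le> e" and "e \<le> k"
    and "u \<noteq> []" and "strict_prefix u x"
    and "v \<noteq> []" and "strict_prefix v x"
    and "strict_prefix (wpow x e @ u) y"
    and "strict_prefix (wpow x e @ v) y"
    and "inf_prec u v"
  shows "inf_prec (wpow x e @ u) (wpow x e @ v)"
proof -
  define X where "X = wpow x e"
  define X' where "X' = wpow x (e - 1)"
  have XX: "X = x @ X'" unfolding X_def X'_def using assms(10)
    by (cases e) (auto simp: wpow_Suc)
  have pu: "prefix u x" and pv: "prefix v x" using assms(13,15) by (auto simp: strict_prefix_def)
  have lu: "length u < length x" and lv: "length v < length x"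
    using assms(13,15) prefix_length_less by blast+
  have H: "u @ v < v @ u \<or> (u @ v = v @ u \<and> length v < length u)"
    using KEY[of u v] assms(12,14,18) by blast
  have "(X @ u) @ (X @ v) < (X @ v) @ (X @ u)"
  proof (cases "prefix u v")
    case True
    then obtain w where w: "v = u @ w" by (auto simp: prefix_def)
    have "u @ (u @ w) < u @ (w @ u)" using H w by auto
    then have uw: "u @ w < w @ u" by (simp add: cancel_less)
    obtain r where r: "X = (u @ w) @ r" using pv w XX by (auto simp: prefix_def)
    obtain r' where r': "X = u @ r'" using pu XX by (auto simp: prefix_def)
    have "(u @ w) @ (r @ u @ w) < (w @ u) @ (r' @ u)"
      using app_less_notpre[OF uw] by simp
    then have "X @ u @ w < w @ X @ u" using r r' by (metis append.assoc)
    then have "(X @ u) @ (X @ u @ w) < (X @ u) @ (w @ X @ u)" by (simp only: cancel_less)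
    then show ?thesis using w by simp
  next
    case False
    then have "prefix v u" using pu pv prefix_same_cases by blast
    then obtain w where w: "u = v @ w" by (auto simp: prefix_def)
    have H': "w @ v < v @ w \<or> w @ v = v @ w"
      using H w cancel_less[of v "w @ v" "v @ w"] by auto
    have wne: "w \<noteq> []" using H w by auto
    have key: "w @ X @ v < X @ v @ w"
    proof (cases "w @ v < v @ w")
      case True
      obtain r1 where r1: "X = v @ r1" using pv XX by (auto simp: prefix_def)
      obtain r2 where r2: "X = (v @ w) @ r2" using pu w XX by (auto simp: prefix_def)
      have "(w @ v) @ (r1 @ v) < (v @ w) @ (r2 @ v @ w)"
        using app_less_notpre[OF True] by simp
      then show ?thesis using r1 r2 by (metis append.assoc)
    next
      case False
      then have c: "w @ v = v @ w" using H' by blast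
      have "prefix w u" using w c by (metis prefix_def)
      then have "prefix w x" using pu by (metis prefix_order.trans)
      then obtain s where xs: "x = w @ s" by (auto simp: prefix_def)
      have lw: "0 < length w" "length w < length x" using wne lu w by auto
      have "lex_less x (drop (length w) x)" using assms(4) lw unfolding lyndon_def by blast
      then have xs_lt: "x < s" using xs lex_less_iff by (metis append_eq_conv_conj)
      have "x @ (X' @ v) < s @ (X' @ w @ v)"
        using app_less_notpre[OF xs_lt] xs by simp
      then have "w @ (x @ X' @ v) < w @ (s @ X' @ w @ v)" by (simp only: cancel_less)
      then show ?thesis using XX xs c by simp
    qed
    then have "(X @ v) @ (w @ X @ v) < (X @ v) @ (X @ v @ w)" by (simp only: cancel_less)
    then show ?thesis using w by simp
  qed
  then show ?thesis unfolding X_def[symmetric] using KEY[of "X @ u" "X @ v"] assms(12,14) by simp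
qed

end
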